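(* Let $p(1),\dots,p(K)\in[0,1]$, let $\mathbb F_i$ be the CDF of $\mathrm{Bern}(p(i))$, and for $\alpha\in\Delta^{K-1}$ write $\mathbb F_\alpha=\sum_i\alpha(i)\mathbb F_i$. Let $h(u)=u(1-u)$. Then: (1) for all $\alpha,\beta\in\Delta^{K-1}$, $U_h(\mathbb F_\alpha)-U_h(\mathbb F_\beta)\le \|\mathbb F_\alpha-\mathbb F_\beta\|_{\mathrm W}$; (2) let $\alpha^\star\in\arg\max_{\alpha\in\Delta^{K-1}}U_h(\mathbb F_\alpha)$ and $\mathbb F^\star=\mathbb F_{\alpha^\star}$. If $\max_i p(i)<\tfrac12$ or $\min_i p(i)>\tfrac12$, then $U_h(\mathbb F^\star)-U_h(\mathbb F_\alpha)\le\|\mathbb F^\star-\mathbb F_\alpha\|_{\mathrm W}$ for all $\alpha\in\Delta^{K-1}$; otherwise (i.e., there exist $i,j$ with $p(i)\le\tfrac12\le p(j)$), $U_h(\mathbb F^\star)-U_h(\mathbb F_\alpha)\le\|\mathbb F^\star-\mathbb F_\alpha\|_{\mathrm W}^2$ for all $\alpha\in\Delta^{K-1}$.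
   Context: For a CDF $Q$ of a nonnegative random variable, $U_h(Q)=\int_0^\infty h(1-Q(x))\,dx$. $\|\cdot\|_{\mathrm W}$ is the 1-Wasserstein distance, $\|G-S\|_{\mathrm W}=\int|G(x)-S(x)|dx$ for CDFs $G,S$. $\Delta^{K-1}$ is the probability simplex in $\mathbb R^K$. *)

theory Defs
  imports "HOL-Analysis.Analysis"
begin

definition U_h :: "(real \<Rightarrow> real) \<Rightarrow> (real \<Rightarrow> real) \<Rightarrow> real" where
  "U_h h Q = integral {0..} (\<lambda>x. h (1 - Q x))"

definition wass :: "(real \<Rightarrow> real) \<Rightarrow> (real \<Rightarrow> real) \<Rightarrow> real" where
  "wass G S = integral UNIV (\<lambda>x. \<bar>G x - S x\<bar>)"

definition bern_cdf :: "real \<Rightarrow> real \<Rightarrow> real" where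
  "bern_cdf p x = (if x < 0 then 0 else if x < 1 then 1 - p else 1)"

definition prob_simplex :: "nat \<Rightarrow> (nat \<Rightarrow> real) set" where
  "prob_simplex K = {\<alpha>. (\<forall>i<K. 0 \<le> \<alpha> i) \<and> (\<forall>i. K \<le> i \<longrightarrow> \<alpha> i = 0) \<and> (\<Sum>i<K. \<alpha> i) = 1}"

definition mix_cdf :: "nat \<Rightarrow> (nat \<Rightarrow> real) \<Rightarrow> (nat \<Rightarrow> real) \<Rightarrow> real \<Rightarrow> real" where
  "mix_cdf K p \<alpha> x = (\<Sum>i<K. \<alpha> i * bern_cdf (p i) x)"

definition hvar :: "real \<Rightarrow> real" where
  "hvar u = u * (1 - u)"

end

theory Submission
  imports Defs
begin

lemma mix_bern:
  assumes "\<alpha> \<in> prob_simplex K"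
  shows "mix_cdf K p \<alpha> = bern_cdf (\<Sum>i<K. \<alpha> i * p i)"
proof
  fix x
  have s: "(\<Sum>i<K. \<alpha> i) = 1" using assms by (simp add: prob_simplex_def)
  have "(\<Sum>i<K. \<alpha> i * (1 - p i)) = (\<Sum>i<K. \<alpha> i) - (\<Sum>i<K. \<alpha> i * p i)"
    by (simp add: algebra_simps sum_subtractf)
  then show "mix_cdf K p \<alpha> x = bern_cdf (\<Sum>i<K. \<alpha> i * p i) x"
    unfolding mix_cdf_def bern_cdf_def using s by auto
qed

lemma int_box: "((\<lambda>x::real. if x < 0 then 0 else if x < 1 then (c::real) else 0) has_integral c) UNIV"
proof -
  have "((\<lambda>x::real. if x \<in> {0..1} then c else 0) has_integral c) UNIV"
    using has_integral_restrict_UNIV[of "{0..1::real}" "\<lambda>_. c" c]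
      has_integral_const_real[of c 0 1] by simp
  then show ?thesis
    by (rule has_integral_spike[OF negligible_sing[of 1], rotated]) auto
qed

lemma U_bern: "U_h hvar (bern_cdf q) = q * (1 - q)"
proof -
  have "((\<lambda>x::real. if x \<in> {0..} then hvar (1 - bern_cdf q x) else 0) has_integral q*(1-q)) UNIV"
    using int_box[of "q*(1-q)"]
    by (rule has_integral_eq[rotated]) (auto simp: hvar_def bern_cdf_def)
  then have "((\<lambda>x. hvar (1 - bern_cdf q x)) has_integral q*(1-q)) {0..}"
    using has_integral_restrict_UNIV by blast
  then show ?thesis unfolding U_h_def by (rule integral_unique)
qed

lemma W_bern: "wass (bern_cdf q) (bern_cdf r) = \<bar>q - r\<bar>"
proof -
  have "((\<lambda>x::real. \<bar>bern_cdf q x - bern_cdf r x\<bar>) has_integral \<bar>q - r\<bar>) UNIV"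
    using int_box[of "\<bar>q-r\<bar>"]
    by (rule has_integral_eq[rotated]) (auto simp: bern_cdf_def)
  then show ?thesis unfolding wass_def by (rule integral_unique)
qed

lemma q_range:
  assumes "\<alpha> \<in> prob_simplex K" "\<forall>i<K. 0 \<le> p i \<and> p i \<le> 1"
  shows "0 \<le> (\<Sum>i<K. \<alpha> i * p i) \<and> (\<Sum>i<K. \<alpha> i * p i) \<le> 1"
proof -
  have a: "\<forall>i<K. 0 \<le> \<alpha> i" "(\<Sum>i<K. \<alpha> i) = 1" using assms(1) by (auto simp: prob_simplex_def)
  have "(\<Sum>i<K. \<alpha> i * p i) \<le> (\<Sum>i<K. \<alpha> i)"
    by (rule sum_mono) (use a assms(2) in \<open>auto intro: mult_left_le\<close>)
  moreover have "0 \<le> (\<Sum>i<K. \<alpha> i * p i)"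
    by (rule sum_nonneg) (use a assms(2) in auto)
  ultimately show ?thesis using a by simp
qed

theorem mainTheorem4:
  fixes K :: nat and p :: "nat \<Rightarrow> real"
  assumes "K > 0"
    and "\<forall>i<K. 0 \<le> p i \<and> p i \<le> 1"
  shows "(\<forall>\<alpha>\<in>prob_simplex K. \<forall>\<beta>\<in>prob_simplex K.
            U_h hvar (mix_cdf K p \<alpha>) - U_h hvar (mix_cdf K p \<beta>)
              \<le> wass (mix_cdf K p \<alpha>) (mix_cdf K p \<beta>))
       \<and> (\<forall>\<alpha>s\<in>prob_simplex K.
            (\<forall>\<alpha>\<in>prob_simplex K. U_h hvar (mix_cdf K p \<alpha>) \<le> U_h hvar (mix_cdf K p \<alpha>s)) \<longrightarrow>
            ((Max (p ` {..<K}) < 1/2 \<or> Min (p ` {..<K}) > 1/2) \<longrightarrow>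
               (\<forall>\<alpha>\<in>prob_simplex K. U_h hvar (mix_cdf K p \<alpha>s) - U_h hvar (mix_cdf K p \<alpha>)
                  \<le> wass (mix_cdf K p \<alpha>s) (mix_cdf K p \<alpha>)))
          \<and> (\<not> (Max (p ` {..<K}) < 1/2 \<or> Min (p ` {..<K}) > 1/2) \<longrightarrow>
               (\<forall>\<alpha>\<in>prob_simplex K. U_h hvar (mix_cdf K p \<alpha>s) - U_h hvar (mix_cdf K p \<alpha>)
                  \<le> (wass (mix_cdf K p \<alpha>s) (mix_cdf K p \<alpha>))\<^sup>2)))"
proof -
  define Q where "Q \<alpha> = (\<Sum>i<K. \<alpha> i * p i)" for \<alpha>
  have U: "U_h hvar (mix_cdf K p \<alpha>) = Q \<alpha> * (1 - Q \<alpha>)" if "\<alpha> \<in> prob_simplex K" for \<alpha>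
    using mix_bern[OF that] U_bern Q_def by simp
  have W: "wass (mix_cdf K p \<alpha>) (mix_cdf K p \<beta>) = \<bar>Q \<alpha> - Q \<beta>\<bar>"
    if "\<alpha> \<in> prob_simplex K" "\<beta> \<in> prob_simplex K" for \<alpha> \<beta>
    using mix_bern[OF that(1)] mix_bern[OF that(2)] W_bern Q_def by simp
  have R: "0 \<le> Q \<alpha> \<and> Q \<alpha> \<le> 1" if "\<alpha> \<in> prob_simplex K" for \<alpha>
    using q_range[OF that assms(2)] Q_def by simp
  have part1: "U_h hvar (mix_cdf K p \<alpha>) - U_h hvar (mix_cdf K p \<beta>)
              \<le> wass (mix_cdf K p \<alpha>) (mix_cdf K p \<beta>)"
    if "\<alpha> \<in> prob_simplex K" "\<beta> \<in> prob_simplex K" for \<alpha> \<beta>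
  proof -
    have e: "Q \<alpha> * (1 - Q \<alpha>) - Q \<beta> * (1 - Q \<beta>) = (Q \<alpha> - Q \<beta>) * (1 - Q \<alpha> - Q \<beta>)"
      by (simp add: algebra_simps)
    have "\<bar>1 - Q \<alpha> - Q \<beta>\<bar> \<le> 1" using R[OF that(1)] R[OF that(2)] by auto
    have "(Q \<alpha> - Q \<beta>) * (1 - Q \<alpha> - Q \<beta>) \<le> \<bar>Q \<alpha> - Q \<beta>\<bar> * \<bar>1 - Q \<alpha> - Q \<beta>\<bar>"
      by (simp add: abs_mult[symmetric])
    also have "\<dots> \<le> \<bar>Q \<alpha> - Q \<beta>\<bar> * 1"
      by (rule mult_left_mono) (use \<open>\<bar>1 - Q \<alpha> - Q \<beta>\<bar> \<le> 1\<close> in auto)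
    finally have "(Q \<alpha> - Q \<beta>) * (1 - Q \<alpha> - Q \<beta>) \<le> \<bar>Q \<alpha> - Q \<beta>\<bar>" by simp
    then show ?thesis using U[OF that(1)] U[OF that(2)] W[OF that] e by simp
  qed
  have part2: "U_h hvar (mix_cdf K p \<alpha>s) - U_h hvar (mix_cdf K p \<alpha>)
                  \<le> (wass (mix_cdf K p \<alpha>s) (mix_cdf K p \<alpha>))\<^sup>2"
    if as: "\<alpha>s \<in> prob_simplex K"
      and mx: "\<forall>\<alpha>\<in>prob_simplex K. U_h hvar (mix_cdf K p \<alpha>) \<le> U_h hvar (mix_cdf K p \<alpha>s)"
      and nc: "\<not> (Max (p ` {..<K}) < 1/2 \<or> Min (p ` {..<K}) > 1/2)"
      and a: "\<alpha> \<in> prob_simplex K" for \<alpha>s \<alpha>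
  proof -
    have fin: "finite (p ` {..<K})" "p ` {..<K} \<noteq> {}" using assms(1) by auto
    obtain j where j: "j < K" "p j = Max (p ` {..<K})" using Max_in[OF fin] by auto
    obtain i where i: "i < K" "p i = Min (p ` {..<K})" using Min_in[OF fin] by auto
    have pj: "p j \<ge> 1/2" and pi: "p i \<le> 1/2" using nc i j by auto
    have ij: "p i \<le> p j" using Min_le[OF fin(1), of "p j"] j(1) i(2) by auto
    define t where "t = (p j - 1/2) / (p j - p i)"
    have t0: "0 \<le> t" and t1: "t \<le> 1" using pj pi ij unfolding t_def
      by (auto simp: divide_simps)
    define \<gamma> where "\<gamma> k = (if k = i then t else 0) + (if k = j then 1 - t else 0)" for k
    have sI: "(\<Sum>k<K. (if k = i then f k else 0)) = f i" for f :: "nat \<Rightarrow> real"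
      using i(1) sum.delta[of "{..<K}" i f] by simp
    have sJ: "(\<Sum>k<K. (if k = j then f k else 0)) = f j" for f :: "nat \<Rightarrow> real"
      using j(1) sum.delta[of "{..<K}" j f] by simp
    have gs: "(\<Sum>k<K. \<gamma> k) = 1"
      unfolding \<gamma>_def sum.distrib sI[of "\<lambda>_. t"] sJ[of "\<lambda>_. 1 - t"] by simp
    have g: "\<gamma> \<in> prob_simplex K"
      unfolding prob_simplex_def using gs t0 t1 i j by (auto simp: \<gamma>_def)
    have "(\<Sum>k<K. \<gamma> k * p k) = (\<Sum>k<K. (if k = i then t * p k else 0) + (if k = j then (1 - t) * p k else 0))"
      by (rule sum.cong) (auto simp: \<gamma>_def algebra_simps)
    then have "Q \<gamma> = t * p i + (1 - t) * p j"
      unfolding Q_def sum.distrib sI[of "\<lambda>k. t * p k"] sJ[of "\<lambda>k. (1 - t) * p k"] .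
    also have "\<dots> = 1/2"
    proof (cases "p i = p j")
      case True then have "p j = 1/2" "p i = 1/2" using pi pj by auto
      then show ?thesis by (simp add: algebra_simps)
    next
      case False then have "p j - p i \<noteq> 0" by simp
      then have "t * (p j - p i) = p j - 1/2" unfolding t_def by simp
      then show ?thesis by (simp add: algebra_simps)
    qed
    finally have qg: "Q \<gamma> = 1/2" .
    have "1/4 \<le> Q \<alpha>s * (1 - Q \<alpha>s)" using mx g U[OF g] U[OF as] qg by force
    moreover have "(Q \<alpha>s - 1/2)^2 \<ge> 0" by simp
    ultimately have "(Q \<alpha>s - 1/2)^2 = 0" by (simp add: power2_eq_square algebra_simps)
    then have qs: "Q \<alpha>s = 1/2" by simp
    show ?thesis using U[OF as] U[OF a] W[OF as a] qs
      by (simp add: power2_eq_square algebra_simps)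
  qed
  show ?thesis using part1 part2 by blast
qed

end
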